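(* Let $\Gamma$ be a finite connected $(G,2)$-distance-transitive graph of valency $k\ge2$. If $\gcd(b_1,k)=1$ and $c_2\mid k$, then $\Gamma$ is $(G,2)$-geodesic-transitive. In particular, if $\gcd(b_1,k)=1$ and $\gcd(b_1,c_2)=1$, then $\Gamma$ is $(G,2)$-geodesic-transitive.
   Context: For $G\le\mathrm{Aut}(\Gamma)$, $\Gamma$ is $(G,2)$-distance-transitive if its diameter is at least $2$, $G$ is vertex-transitive and $G_u$ is transitive on $\Gamma(u)$ and $\Gamma_2(u)$ for each $u$. For $u$ and $w$ at distance $i\le2$, $b_i$ (resp. $c_i$) denotes the number of neighbours of $w$ at distance $i+1$ (resp. $i-1$) from $u$; these are independent of $u,w$. A $2$-geodesic is a triple $(u,v,w)$ with $u\sim v\sim w$, $u\ne w$, $u\not\sim w$; $\Gamma$ is $(G,2)$-geodesic-transitive if it is $G$-arc-transitive, non-complete, and $G$ is transitive on $2$-geodesics. *)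

theory Defs
  imports Main
begin

definition simple_graph :: "'a set \<Rightarrow> ('a \<Rightarrow> 'a \<Rightarrow> bool) \<Rightarrow> bool" where
  "simple_graph V E \<longleftrightarrow> finite V \<and> (\<forall>u\<in>V. \<forall>v\<in>V. E u v \<longleftrightarrow> E v u) \<and> (\<forall>u\<in>V. \<not> E u u)"

definition edges :: "'a set \<Rightarrow> ('a \<Rightarrow> 'a \<Rightarrow> bool) \<Rightarrow> ('a \<times> 'a) set" where
  "edges V E = {(x, y). x \<in> V \<and> y \<in> V \<and> E x y}"

definition connected_graph :: "'a set \<Rightarrow> ('a \<Rightarrow> 'a \<Rightarrow> bool) \<Rightarrow> bool" where
  "connected_graph V E \<longleftrightarrow> (\<forall>u\<in>V. \<forall>v\<in>V. (u, v) \<in> (edges V E)\<^sup>*)"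

text \<open>Graph distance: least length of a walk (meaningful for connected graphs).\<close>
definition gdist :: "'a set \<Rightarrow> ('a \<Rightarrow> 'a \<Rightarrow> bool) \<Rightarrow> 'a \<Rightarrow> 'a \<Rightarrow> nat" where
  "gdist V E u v = (LEAST n. (u, v) \<in> (edges V E) ^^ n)"

definition sphere :: "'a set \<Rightarrow> ('a \<Rightarrow> 'a \<Rightarrow> bool) \<Rightarrow> nat \<Rightarrow> 'a \<Rightarrow> 'a set" where
  "sphere V E i u = {w \<in> V. gdist V E u w = i}"

definition nbhd :: "'a set \<Rightarrow> ('a \<Rightarrow> 'a \<Rightarrow> bool) \<Rightarrow> 'a \<Rightarrow> 'a set" where
  "nbhd V E u = {v \<in> V. E u v}"

definition regular_of :: "'a set \<Rightarrow> ('a \<Rightarrow> 'a \<Rightarrow> bool) \<Rightarrow> nat \<Rightarrow> bool" where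
  "regular_of V E k \<longleftrightarrow> (\<forall>u\<in>V. card (nbhd V E u) = k)"

definition aut_subgroup :: "'a set \<Rightarrow> ('a \<Rightarrow> 'a \<Rightarrow> bool) \<Rightarrow> ('a \<Rightarrow> 'a) set \<Rightarrow> bool" where
  "aut_subgroup V E G \<longleftrightarrow>
     id \<in> G \<and>
     (\<forall>g\<in>G. bij_betw g V V \<and> (\<forall>x. x \<notin> V \<longrightarrow> g x = x) \<and>
              (\<forall>u\<in>V. \<forall>v\<in>V. E u v \<longleftrightarrow> E (g u) (g v))) \<and>
     (\<forall>g\<in>G. \<forall>h\<in>G. g \<circ> h \<in> G) \<and>
     (\<forall>g\<in>G. \<exists>h\<in>G. \<forall>x. h (g x) = x)"

definition diameter_ge2 :: "'a set \<Rightarrow> ('a \<Rightarrow> 'a \<Rightarrow> bool) \<Rightarrow> bool" where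
  "diameter_ge2 V E \<longleftrightarrow> (\<exists>u\<in>V. \<exists>w\<in>V. gdist V E u w \<ge> 2)"

definition dist2_transitive :: "'a set \<Rightarrow> ('a \<Rightarrow> 'a \<Rightarrow> bool) \<Rightarrow> ('a \<Rightarrow> 'a) set \<Rightarrow> bool" where
  "dist2_transitive V E G \<longleftrightarrow>
     diameter_ge2 V E \<and>
     (\<forall>u\<in>V. \<forall>v\<in>V. \<exists>g\<in>G. g u = v) \<and>
     (\<forall>u\<in>V. \<forall>i\<in>{1,2}. \<forall>v\<in>sphere V E i u. \<forall>w\<in>sphere V E i u. \<exists>g\<in>G. g u = u \<and> g v = w)"

definition b_count :: "'a set \<Rightarrow> ('a \<Rightarrow> 'a \<Rightarrow> bool) \<Rightarrow> nat \<Rightarrow> 'a \<Rightarrow> 'a \<Rightarrow> nat" where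
  "b_count V E i u w = card {x \<in> nbhd V E w. gdist V E u x = i + 1}"

definition c_count :: "'a set \<Rightarrow> ('a \<Rightarrow> 'a \<Rightarrow> bool) \<Rightarrow> nat \<Rightarrow> 'a \<Rightarrow> 'a \<Rightarrow> nat" where
  "c_count V E i u w = card {x \<in> nbhd V E w. gdist V E u x + 1 = i}"

definition is_b :: "'a set \<Rightarrow> ('a \<Rightarrow> 'a \<Rightarrow> bool) \<Rightarrow> nat \<Rightarrow> nat \<Rightarrow> bool" where
  "is_b V E i n \<longleftrightarrow> (\<forall>u\<in>V. \<forall>w\<in>V. gdist V E u w = i \<longrightarrow> b_count V E i u w = n)"

definition is_c :: "'a set \<Rightarrow> ('a \<Rightarrow> 'a \<Rightarrow> bool) \<Rightarrow> nat \<Rightarrow> nat \<Rightarrow> bool" where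
  "is_c V E i n \<longleftrightarrow> (\<forall>u\<in>V. \<forall>w\<in>V. gdist V E u w = i \<longrightarrow> c_count V E i u w = n)"

definition arc_transitive :: "'a set \<Rightarrow> ('a \<Rightarrow> 'a \<Rightarrow> bool) \<Rightarrow> ('a \<Rightarrow> 'a) set \<Rightarrow> bool" where
  "arc_transitive V E G \<longleftrightarrow>
     (\<forall>u\<in>V. \<forall>v\<in>V. \<forall>u'\<in>V. \<forall>v'\<in>V. E u v \<longrightarrow> E u' v' \<longrightarrow> (\<exists>g\<in>G. g u = u' \<and> g v = v'))"

definition is_2geodesic :: "'a set \<Rightarrow> ('a \<Rightarrow> 'a \<Rightarrow> bool) \<Rightarrow> 'a \<times> 'a \<times> 'a \<Rightarrow> bool" where
  "is_2geodesic V E t = (case t of (u, v, w) \<Rightarrow>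
     u \<in> V \<and> v \<in> V \<and> w \<in> V \<and> E u v \<and> E v w \<and> u \<noteq> w \<and> \<not> E u w)"

definition complete_graph :: "'a set \<Rightarrow> ('a \<Rightarrow> 'a \<Rightarrow> bool) \<Rightarrow> bool" where
  "complete_graph V E \<longleftrightarrow> (\<forall>u\<in>V. \<forall>v\<in>V. u \<noteq> v \<longrightarrow> E u v)"

definition geod2_transitive :: "'a set \<Rightarrow> ('a \<Rightarrow> 'a \<Rightarrow> bool) \<Rightarrow> ('a \<Rightarrow> 'a) set \<Rightarrow> bool" where
  "geod2_transitive V E G \<longleftrightarrow>
     arc_transitive V E G \<and> \<not> complete_graph V E \<and>
     (\<forall>u v w u' v' w'. is_2geodesic V E (u, v, w) \<longrightarrow> is_2geodesic V E (u', v', w') \<longrightarrow>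
        (\<exists>g\<in>G. g u = u' \<and> g v = v' \<and> g w = w'))"

end

theory Submission
  imports Defs
begin

lemma least_eq_iff:
  assumes "\<exists>n. P n"
  shows "(Least P = (n::nat)) \<longleftrightarrow> (P n \<and> (\<forall>m<n. \<not> P m))"
  using assms by (metis LeastI_ex Least_equality not_less_Least leI)

lemma all_less2: "(\<forall>m<(2::nat). Q m) \<longleftrightarrow> (Q 0 \<and> Q 1)"
proof
  assume "Q 0 \<and> Q 1"
  then show "\<forall>m<(2::nat). Q m"
    by (metis One_nat_def less_2_cases)
qed auto

lemma card_fib:
  assumes "finite A" "R \<subseteq> A \<times> B" "\<forall>a\<in>A. card {b. (a,b)\<in>R} = m" "finite B"
  shows "card R = card A * m"
proof -
  have e: "R = Sigma A (\<lambda>a. {b. (a,b)\<in>R})" using assms(2) by auto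
  have "\<forall>a\<in>A. finite {b. (a,b)\<in>R}"
    using assms(2,4) by (auto intro: finite_subset)
  then have "card R = (\<Sum>a\<in>A. card {b. (a,b)\<in>R})"
    using e assms(1) by (metis card_SigmaI)
  also have "\<dots> = card A * m" using assms(3) by simp
  finally show ?thesis .
qed

lemma card_fib2:
  assumes "finite B" "R \<subseteq> A \<times> B" "\<forall>b\<in>B. card {a. (a,b)\<in>R} = n" "finite A"
  shows "card R = card B * n"
proof -
  define R' where "R' = (\<lambda>(a,b). (b,a)) ` R"
  have "inj_on (\<lambda>(a,b). (b,a)) R" by (auto simp: inj_on_def)
  then have c: "card R' = card R" unfolding R'_def by (rule card_image)
  have s: "R' \<subseteq> B \<times> A" using assms(2) unfolding R'_def by auto
  have f: "\<forall>b\<in>B. card {a. (b,a)\<in>R'} = n"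
  proof
    fix b assume "b \<in> B"
    have "{a. (b,a)\<in>R'} = {a. (a,b)\<in>R}" unfolding R'_def by auto
    then show "card {a. (b,a)\<in>R'} = n" using assms(3) \<open>b\<in>B\<close> by simp
  qed
  show ?thesis using card_fib[OF assms(1) s f assms(4)] c by simp
qed

lemma fiber_le:
  assumes "finite B" "R \<subseteq> A \<times> B" "\<forall>g\<in>H. inj g"
    "\<forall>g\<in>H. \<forall>a b. (a,b)\<in>R \<longrightarrow> (g a, g b)\<in>R" "\<exists>g\<in>H. g x = y"
  shows "card {b. (x,b)\<in>R} \<le> card {b. (y,b)\<in>R}"
proof -
  obtain g where g: "g \<in> H" "g x = y" using assms(5) by blast
  have "g ` {b. (x,b)\<in>R} \<subseteq> {b. (y,b)\<in>R}" using assms(4) g by auto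
  moreover have "finite {b. (y,b)\<in>R}" using assms(1,2) by (auto intro: finite_subset)
  moreover have "inj_on g {b. (x,b)\<in>R}" using assms(3) g by (auto simp: inj_on_def inj_def)
  ultimately show ?thesis by (meson card_inj_on_le)
qed

lemma fiber_le2:
  assumes "finite A" "R \<subseteq> A \<times> B" "\<forall>g\<in>H. inj g"
    "\<forall>g\<in>H. \<forall>a b. (a,b)\<in>R \<longrightarrow> (g a, g b)\<in>R" "\<exists>g\<in>H. g x = y"
  shows "card {a. (a,x)\<in>R} \<le> card {a. (a,y)\<in>R}"
proof -
  obtain g where g: "g \<in> H" "g x = y" using assms(5) by blast
  have "g ` {a. (a,x)\<in>R} \<subseteq> {a. (a,y)\<in>R}" using assms(4) g by auto
  moreover have "finite {a. (a,y)\<in>R}" using assms(1,2) by (auto intro: finite_subset)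
  moreover have "inj_on g {a. (a,x)\<in>R}" using assms(3) g by (auto simp: inj_on_def inj_def)
  ultimately show ?thesis by (meson card_inj_on_le)
qed

locale dtg =
  fixes V :: "'a set" and E :: "'a \<Rightarrow> 'a \<Rightarrow> bool" and G :: "('a \<Rightarrow> 'a) set"
  assumes sg: "simple_graph V E" and cg: "connected_graph V E"
    and ag: "aut_subgroup V E G" and dt: "dist2_transitive V E G"
begin

lemma finV: "finite V" using sg by (simp add: simple_graph_def)
lemma symE: "u \<in> V \<Longrightarrow> v \<in> V \<Longrightarrow> E u v \<longleftrightarrow> E v u" using sg by (simp add: simple_graph_def)
lemma irrE: "u \<in> V \<Longrightarrow> \<not> E u u" using sg by (simp add: simple_graph_def)

lemma reach: "u \<in> V \<Longrightarrow> w \<in> V \<Longrightarrow> \<exists>n. (u,w) \<in> edges V E ^^ n"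
  using cg by (metis connected_graph_def rtrancl_power)

lemma P0: "(u,w) \<in> edges V E ^^ 0 \<longleftrightarrow> u = w" by simp
lemma P1: "(u,w) \<in> edges V E ^^ 1 \<longleftrightarrow> u \<in> V \<and> w \<in> V \<and> E u w" by (simp add: edges_def)
lemma P2: "(u,w) \<in> edges V E ^^ 2 \<longleftrightarrow> (\<exists>v. u \<in> V \<and> v \<in> V \<and> w \<in> V \<and> E u v \<and> E v w)"
  by (auto simp: numeral_2_eq_2 edges_def relcomp_unfold)

lemma gd0: "u \<in> V \<Longrightarrow> w \<in> V \<Longrightarrow> gdist V E u w = 0 \<longleftrightarrow> u = w"
  unfolding gdist_def using least_eq_iff[OF reach, of u w 0] P0 by simp

lemma gd1: "u \<in> V \<Longrightarrow> w \<in> V \<Longrightarrow> gdist V E u w = 1 \<longleftrightarrow> E u w"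
  unfolding gdist_def using least_eq_iff[OF reach, of u w 1] P0 P1 irrE
  by (auto simp: less_Suc_eq)

lemma gd2: "u \<in> V \<Longrightarrow> w \<in> V \<Longrightarrow> gdist V E u w = 2 \<longleftrightarrow>
   (u \<noteq> w \<and> \<not> E u w \<and> (\<exists>v\<in>V. E u v \<and> E v w))"
  unfolding gdist_def using least_eq_iff[OF reach, of u w 2] P0 P1 P2
  by (auto simp: all_less2)

lemma gV: "g \<in> G \<Longrightarrow> x \<in> V \<Longrightarrow> g x \<in> V"
proof -
  assume "g \<in> G" "x \<in> V"
  moreover from ag \<open>g \<in> G\<close> have "bij_betw g V V" by (simp add: aut_subgroup_def)
  ultimately show ?thesis by (meson bij_betw_apply)
qed
lemma gE: "g \<in> G \<Longrightarrow> x \<in> V \<Longrightarrow> y \<in> V \<Longrightarrow> E (g x) (g y) \<longleftrightarrow> E x y"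
  using ag by (simp add: aut_subgroup_def)
lemma ginv: "g \<in> G \<Longrightarrow> \<exists>h\<in>G. \<forall>x. h (g x) = x"
  using ag by (simp add: aut_subgroup_def)
lemma ginj: "g \<in> G \<Longrightarrow> inj g"
  using ginv by (metis injI)
lemma gcomp: "g \<in> G \<Longrightarrow> h \<in> G \<Longrightarrow> g \<circ> h \<in> G"
  using ag by (simp add: aut_subgroup_def)
lemma gtrans: "u \<in> V \<Longrightarrow> v \<in> V \<Longrightarrow> \<exists>g\<in>G. g u = v"
  using dt by (simp add: dist2_transitive_def)
lemma gstab1: "u \<in> V \<Longrightarrow> v \<in> V \<Longrightarrow> w \<in> V \<Longrightarrow> E u v \<Longrightarrow> E u w \<Longrightarrow> \<exists>g\<in>G. g u = u \<and> g v = w"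
  using dt gd1 unfolding dist2_transitive_def sphere_def by auto
lemma gstab2: "u \<in> V \<Longrightarrow> v \<in> V \<Longrightarrow> w \<in> V \<Longrightarrow> gdist V E u v = 2 \<Longrightarrow> gdist V E u w = 2
   \<Longrightarrow> \<exists>g\<in>G. g u = u \<and> g v = w"
  using dt unfolding dist2_transitive_def sphere_def by auto

lemma gd2_pres: "g \<in> G \<Longrightarrow> u \<in> V \<Longrightarrow> w \<in> V \<Longrightarrow> gdist V E u w = 2 \<Longrightarrow> gdist V E (g u) (g w) = 2"
proof -
  assume g: "g \<in> G" and uw: "u \<in> V" "w \<in> V" and d: "gdist V E u w = 2"
  then obtain v where v: "v \<in> V" "E u v" "E v w" "u \<noteq> w" "\<not> E u w" using gd2 by blast
  have "g u \<noteq> g w" using ginj[OF g] v(4) by (meson injD)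
  moreover have "\<not> E (g u) (g w)" using gE g uw v by simp
  moreover have "g v \<in> V \<and> E (g u) (g v) \<and> E (g v) (g w)" using gE gV g uw v by simp
  ultimately show ?thesis using gd2 gV g uw by blast
qed


lemma key:
  assumes u: "u \<in> V" and cop: "gcd b1 c2 = 1" and hb: "is_b V E 1 b1" and hc: "is_c V E 2 c2"
    and reg: "regular_of V E k" and kpos: "k > 0"
    and p0: "v0 \<in> V" "w0 \<in> V" "E u v0" "E v0 w0" "gdist V E u w0 = 2"
    and p: "v \<in> V" "w \<in> V" "E u v" "E v w" "gdist V E u w = 2"
  shows "\<exists>g\<in>G. g u = u \<and> g v0 = v \<and> g w0 = w"
proof -
  define P where "P = {(a,b). a \<in> V \<and> b \<in> V \<and> E u a \<and> E a b \<and> gdist V E u b = 2}"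
  define H where "H = {g\<in>G. g u = u}"
  define R where "R = {(g v0, g w0) | g. g \<in> H}"
  define A where "A = nbhd V E u"
  define B where "B = sphere V E 2 u"
  have finA: "finite A" unfolding A_def nbhd_def using finV by simp
  have finB: "finite B" unfolding B_def sphere_def using finV by simp
  have PAB: "P \<subseteq> A \<times> B" unfolding P_def A_def B_def nbhd_def sphere_def by auto
  have RP: "R \<subseteq> P"
  proof
    fix x assume "x \<in> R"
    then obtain g where g: "g \<in> G" "g u = u" "x = (g v0, g w0)" unfolding R_def H_def by blast
    have "gdist V E (g u) (g w0) = 2" using gd2_pres g(1) u p0 by blast
    moreover have "E u (g v0)" using gE[OF g(1) u p0(1)] g(2) p0(3) by simp
    moreover have "E (g v0) (g w0)" using gE[OF g(1) p0(1) p0(2)] p0(4) by simp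
    ultimately show "x \<in> P" unfolding P_def using g gV u p0 by auto
  qed
  have RAB: "R \<subseteq> A \<times> B" using RP PAB by blast
  have Hinj: "\<forall>g\<in>H. inj g" unfolding H_def using ginj by blast
  have Hcl: "\<forall>g\<in>H. \<forall>a b. (a,b)\<in>R \<longrightarrow> (g a, g b)\<in>R"
  proof (intro ballI allI impI)
    fix g a b assume g: "g \<in> H" and ab: "(a,b) \<in> R"
    then obtain g1 where g1: "g1 \<in> H" "a = g1 v0" "b = g1 w0" unfolding R_def by blast
    have "g \<circ> g1 \<in> H" using g g1 gcomp unfolding H_def by auto
    moreover have "(g a, g b) = ((g \<circ> g1) v0, (g \<circ> g1) w0)" using g1 by simp
    ultimately show "(g a, g b) \<in> R" unfolding R_def by blast
  qed
  have HA: "\<forall>x\<in>A. \<forall>y\<in>A. \<exists>g\<in>H. g x = y"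
    unfolding A_def H_def nbhd_def using gstab1 u by fastforce
  have HB: "\<forall>x\<in>B. \<forall>y\<in>B. \<exists>g\<in>H. g x = y"
    unfolding B_def H_def sphere_def using gstab2 u by fastforce
  have v0A: "v0 \<in> A" unfolding A_def nbhd_def using p0 by simp
  have w0B: "w0 \<in> B" unfolding B_def sphere_def using p0 by simp
  have wB: "w \<in> B" unfolding B_def sphere_def using p by simp
  define m where "m = card {b. (v0,b)\<in>R}"
  define n where "n = card {a. (a,w0)\<in>R}"
  have fibA: "\<forall>x\<in>A. card {b. (x,b)\<in>R} = m"
  proof
    fix x assume "x \<in> A"
    show "card {b. (x,b)\<in>R} = m" unfolding m_def
      using fiber_le[OF finB RAB Hinj Hcl, of x v0] fiber_le[OF finB RAB Hinj Hcl, of v0 x]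
        HA \<open>x\<in>A\<close> v0A by (meson antisym)
  qed
  have fibB: "\<forall>x\<in>B. card {a. (a,x)\<in>R} = n"
  proof
    fix x assume "x \<in> B"
    show "card {a. (a,x)\<in>R} = n" unfolding n_def
      using fiber_le2[OF finA RAB Hinj Hcl, of x w0] fiber_le2[OF finA RAB Hinj Hcl, of w0 x]
        HB \<open>x\<in>B\<close> w0B by (meson antisym)
  qed
  have pfibA: "\<forall>x\<in>A. card {b. (x,b)\<in>P} = b1"
  proof
    fix x assume x: "x \<in> A"
    then have xV: "x \<in> V" and ux: "E u x" unfolding A_def nbhd_def by auto
    have "gdist V E u x = 1" using gd1 u xV ux by simp
    then have "b_count V E 1 u x = b1" using hb u xV unfolding is_b_def by blast
    moreover have "{b. (x,b)\<in>P} = {y \<in> nbhd V E x. gdist V E u y = 1 + 1}"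
      unfolding P_def nbhd_def using xV ux by auto
    ultimately show "card {b. (x,b)\<in>P} = b1" unfolding b_count_def by simp
  qed
  have pfibB: "\<forall>x\<in>B. card {a. (a,x)\<in>P} = c2"
  proof
    fix x assume x: "x \<in> B"
    then have xV: "x \<in> V" and ux: "gdist V E u x = 2" unfolding B_def sphere_def by auto
    then have "c_count V E 2 u x = c2" using hc u xV unfolding is_c_def by blast
    moreover have "{a. (a,x)\<in>P} = {y \<in> nbhd V E x. gdist V E u y + 1 = 2}"
      unfolding P_def nbhd_def using xV ux gd1 u symE by auto
    ultimately show "card {a. (a,x)\<in>P} = c2" unfolding c_count_def by simp
  qed
  have cA: "card A = k" using reg u unfolding regular_of_def A_def by simp
  have e1: "card R = k * m" using card_fib[OF finA RAB fibA finB] cA by simp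
  have e2: "card R = card B * n" using card_fib2[OF finB RAB fibB finA] .
  have e3: "card P = k * b1" using card_fib[OF finA PAB pfibA finB] cA by simp
  have e4: "card P = card B * c2" using card_fib2[OF finB PAB pfibB finA] .
  have finfw: "finite {a. (a,w)\<in>P}" using PAB finA by (auto intro: finite_subset)
  have sub: "{a. (a,w)\<in>R} \<subseteq> {a. (a,w)\<in>P}" using RP by auto
  have "n \<le> c2" using card_mono[OF finfw sub] fibB pfibB wB by simp
  have "(v0,w0) \<in> R" unfolding R_def H_def
    using ag by (auto simp: aut_subgroup_def intro!: exI[of _ id])
  then have "v0 \<in> {a. (a,w0)\<in>R}" by simp
  moreover have "finite {a. (a,w0)\<in>R}" using RAB finA by (auto intro: finite_subset)
  ultimately have "n > 0" unfolding n_def by (metis card_gt_0_iff empty_iff)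
  have "k * (m * c2) = (k * m) * c2" by simp
  also have "\<dots> = (card B * n) * c2" using e1 e2 by simp
  also have "\<dots> = n * (card B * c2)" by simp
  also have "\<dots> = n * (k * b1)" using e3 e4 by simp
  also have "\<dots> = k * (n * b1)" by simp
  finally have "m * c2 = n * b1" using kpos by simp
  then have "c2 dvd n * b1" by (metis dvd_triv_right)
  moreover have "coprime c2 b1" using cop by (simp add: coprime_iff_gcd_eq_1 gcd.commute)
  ultimately have "c2 dvd n" using coprime_dvd_mult_left_iff by blast
  then have "n = c2" using \<open>n \<le> c2\<close> \<open>n > 0\<close> by (simp add: dvd_imp_le le_antisym)
  then have "{a. (a,w)\<in>R} = {a. (a,w)\<in>P}"
    using card_subset_eq[OF finfw sub] fibB pfibB wB by simp
  moreover have "v \<in> {a. (a,w)\<in>P}" unfolding P_def using p by simp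
  ultimately have "(v,w) \<in> R" by blast
  then show ?thesis unfolding R_def H_def by blast
qed

lemma main:
  assumes cop: "gcd b1 c2 = 1" and hb: "is_b V E 1 b1" and hc: "is_c V E 2 c2"
    and reg: "regular_of V E k" and kpos: "k > 0"
  shows "geod2_transitive V E G"
proof -
  have arc: "arc_transitive V E G"
    unfolding arc_transitive_def
  proof (intro ballI impI)
    fix u v u' v' assume V: "u \<in> V" "v \<in> V" "u' \<in> V" "v' \<in> V" and e: "E u v" "E u' v'"
    obtain h where h: "h \<in> G" "h u = u'" using gtrans V by blast
    have "h v \<in> V" "E u' (h v)" using h gV gE V e by auto
    then obtain g where g: "g \<in> G" "g u' = u'" "g (h v) = v'" using gstab1 V e by blast
    show "\<exists>g\<in>G. g u = u' \<and> g v = v'"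
      using gcomp[OF g(1) h(1)] g h by (intro bexI[of _ "g \<circ> h"]) auto
  qed
  have nc: "\<not> complete_graph V E"
  proof
    assume c: "complete_graph V E"
    obtain u w where "u \<in> V" "w \<in> V" "gdist V E u w \<ge> 2"
      using dt unfolding dist2_transitive_def diameter_ge2_def by blast
    then show False using c gd0 gd1 unfolding complete_graph_def
      by (metis not_numeral_le_zero one_le_numeral linorder_not_le numeral_le_one_iff semiring_norm(69))
  qed
  have gt: "\<forall>u v w u' v' w'. is_2geodesic V E (u, v, w) \<longrightarrow> is_2geodesic V E (u', v', w') \<longrightarrow>
        (\<exists>g\<in>G. g u = u' \<and> g v = v' \<and> g w = w')"
  proof (intro allI impI)
    fix u v w u' v' w'
    assume a: "is_2geodesic V E (u, v, w)" and b: "is_2geodesic V E (u', v', w')"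
    then have V: "u \<in> V" "v \<in> V" "w \<in> V" "u' \<in> V" "v' \<in> V" "w' \<in> V"
      and ea: "E u v" "E v w" "u \<noteq> w" "\<not> E u w"
      and eb: "E u' v'" "E v' w'" "u' \<noteq> w'" "\<not> E u' w'"
      unfolding is_2geodesic_def by auto
    have d1: "gdist V E u w = 2" using gd2 V ea by blast
    have d2: "gdist V E u' w' = 2" using gd2 V eb by blast
    obtain h where h: "h \<in> G" "h u = u'" using gtrans V by blast
    have hV: "h v \<in> V" "h w \<in> V" using h gV V by auto
    have he: "E u' (h v)" "E (h v) (h w)" using h gE V ea by auto
    have hd: "gdist V E u' (h w) = 2" using gd2_pres[OF h(1) V(1) V(3) d1] h by simp
    obtain g where g: "g \<in> G" "g u' = u'" "g (h v) = v'" "g (h w) = w'"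
      using key[OF V(4) cop hb hc reg kpos hV he hd V(5) V(6) eb(1) eb(2) d2] by blast
    show "\<exists>g\<in>G. g u = u' \<and> g v = v' \<and> g w = w'"
      using gcomp[OF g(1) h(1)] g h by (intro bexI[of _ "g \<circ> h"]) auto
  qed
  show ?thesis unfolding geod2_transitive_def using arc nc gt by blast
qed

end

theorem lemma5p6:
  fixes V :: "'a set" and E :: "'a \<Rightarrow> 'a \<Rightarrow> bool" and G :: "('a \<Rightarrow> 'a) set"
    and k b1 c2 :: nat
  assumes "simple_graph V E" and "connected_graph V E"
    and "aut_subgroup V E G" and "dist2_transitive V E G"
    and "regular_of V E k" and "k \<ge> 2"
    and "is_b V E 1 b1" and "is_c V E 2 c2"
  shows "(gcd b1 k = 1 \<and> c2 dvd k \<longrightarrow> geod2_transitive V E G)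
       \<and> (gcd b1 k = 1 \<and> gcd b1 c2 = 1 \<longrightarrow> geod2_transitive V E G)"
proof -
  interpret dtg V E G using assms(1-4) by unfold_locales
  have kpos: "k > 0" using assms(6) by simp
  have cd: "gcd b1 c2 = 1" if "gcd b1 k = 1" "c2 dvd k" for k
  proof -
    have "gcd b1 c2 dvd gcd b1 k" using that(2) by (meson dvd_trans gcd_dvd1 gcd_dvd2 gcd_greatest)
    then show ?thesis using that(1) by simp
  qed
  note m = main[OF _ assms(7) assms(8) assms(5) kpos]
  show ?thesis
  proof (intro conjI impI)
    assume h: "gcd b1 k = 1 \<and> c2 dvd k"
    have "gcd b1 c2 = 1" using cd[of k] h by simp
    then show "geod2_transitive V E G" by (rule m)
  next
    assume h: "gcd b1 k = 1 \<and> gcd b1 c2 = 1"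
    then have "gcd b1 c2 = 1" by simp
    then show "geod2_transitive V E G" by (rule m)
  qed
qed

end
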